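(* Let $R$ be a reflexive relation on $U$ and $x\in U$. (i) If $x\notin\mathcal S$ and $\{x\}^{\blacktriangle}$ is completely join-irreducible in $\wp(U)^{\blacktriangle}$, then $(\{x\}^{\blacktriangledown},\{x\}^{\blacktriangle})$ is completely join-irreducible in $\mathrm{DM(RS)}$. (ii) If $\{x\}^{\vartriangle}$ is completely join-irreducible in $\wp(U)^{\vartriangle}$, then $(\{x\}^{\vartriangle\blacktriangledown},\{x\}^{\vartriangle\blacktriangle})$ is completely join-irreducible in $\mathrm{DM(RS)}$.
   Context: Let $U$ be a set and $R\subseteq U\times U$ a binary relation. For $x\in U$, $R(x)=\{y\in U\mid (x,y)\in R\}$ and $\breve R(x)=\{y\in U\mid (y,x)\in R\}$. For $X\subseteq U$: $X^{\blacktriangledown}=\{x\in U\mid R(x)\subseteq X\}$, $X^{\blacktriangle}=\{x\in U\mid R(x)\cap X\neq\emptyset\}$, $X^{\triangledown}=\{x\in U\mid \breve R(x)\subseteq X\}$, $X^{\vartriangle}=\{x\in U\mid \breve R(x)\cap X\neq\emptyset\}$; composites like $X^{\vartriangle\blacktriangledown}$ mean $(X^{\vartriangle})^{\blacktriangledown}$. $\wp(U)^{\blacktriangledown}=\{X^{\blacktriangledown}\mid X\subseteq U\}$ and similarly $\wp(U)^{\blacktriangle},\wp(U)^{\vartriangle}$, complete lattices under $\subseteq$ (joins in $\wp(U)^{\blacktriangle},\wp(U)^{\vartriangle}$ are unions). $\mathcal S=\{x\in U\mid |R(x)|=1\}$. $\mathrm{RS}=\{(X^{\blacktriangledown},X^{\blacktriangle})\mid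 X\subseteq U\}$ ordered coordinatewise; $\mathrm{DM(RS)}$ is its Dedekind–MacNeille completion, identified with $\{(A,B)\in\wp(U)^{\blacktriangledown}\times\wp(U)^{\blacktriangle}\mid A^{\vartriangle\blacktriangle}\subseteq B,\ A\cap\mathcal S=B\cap\mathcal S\}$ ordered coordinatewise, with meets $\bigwedge_i(X_i,Y_i)=(\bigcap_iX_i,(\bigcap_iY_i)^{\triangledown\blacktriangle})$ and joins $\bigvee_i(X_i,Y_i)=((\bigcup_iX_i)^{\vartriangle\blacktriangledown},\bigcup_iY_i)$. An element $j$ of a complete lattice $L$ is completely join-irreducible if $j=\bigvee S$ implies $j\in S$ for every $S\subseteq L$. *)

theory Defs
  imports Main
begin

definition Rsucc :: "'a rel \<Rightarrow> 'a \<Rightarrow> 'a set" where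
  "Rsucc R x = {y. (x, y) \<in> R}"

definition Rpred :: "'a rel \<Rightarrow> 'a \<Rightarrow> 'a set" where
  "Rpred R x = {y. (y, x) \<in> R}"

definition bdown :: "'a rel \<Rightarrow> 'a set \<Rightarrow> 'a set" where
  "bdown R X = {x. Rsucc R x \<subseteq> X}"

definition bup :: "'a rel \<Rightarrow> 'a set \<Rightarrow> 'a set" where
  "bup R X = {x. Rsucc R x \<inter> X \<noteq> {}}"

definition wdown :: "'a rel \<Rightarrow> 'a set \<Rightarrow> 'a set" where
  "wdown R X = {x. Rpred R x \<subseteq> X}"

definition wup :: "'a rel \<Rightarrow> 'a set \<Rightarrow> 'a set" where
  "wup R X = {x. Rpred R x \<inter> X \<noteq> {}}"

definition singS :: "'a rel \<Rightarrow> 'a set" where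
  "singS R = {x. card (Rsucc R x) = 1}"

definition DMRS :: "'a rel \<Rightarrow> ('a set \<times> 'a set) set" where
  "DMRS R = {(A, B). A \<in> range (bdown R) \<and> B \<in> range (bup R)
      \<and> bup R (wup R A) \<subseteq> B \<and> A \<inter> singS R = B \<inter> singS R}"

definition pair_le :: "'a set \<times> 'a set \<Rightarrow> 'a set \<times> 'a set \<Rightarrow> bool" where
  "pair_le p q \<longleftrightarrow> fst p \<subseteq> fst q \<and> snd p \<subseteq> snd q"

definition is_join_in :: "'b set \<Rightarrow> ('b \<Rightarrow> 'b \<Rightarrow> bool) \<Rightarrow> 'b set \<Rightarrow> 'b \<Rightarrow> bool" where
  "is_join_in L le S j \<longleftrightarrow> j \<in> L \<and> (\<forall>s\<in>S. le s j) \<and>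
      (\<forall>u\<in>L. (\<forall>s\<in>S. le s u) \<longrightarrow> le j u)"

definition cji_in :: "'b set \<Rightarrow> ('b \<Rightarrow> 'b \<Rightarrow> bool) \<Rightarrow> 'b \<Rightarrow> bool" where
  "cji_in L le j \<longleftrightarrow> j \<in> L \<and> (\<forall>S\<subseteq>L. is_join_in L le S j \<longrightarrow> j \<in> S)"

end

theory Submission
  imports Defs
begin

lemma bup_Union_range: assumes "Bs \<subseteq> range (bup R)" shows "\<Union>Bs \<in> range (bup R)"
proof -
  have "\<Union>Bs = bup R (\<Union>{Y. bup R Y \<in> Bs})"
  proof
    show "\<Union>Bs \<subseteq> bup R (\<Union>{Y. bup R Y \<in> Bs})"
    proof
      fix y assume "y \<in> \<Union>Bs"
      then obtain B where B: "B \<in> Bs" "y \<in> B" by blast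
      then obtain Y where Y: "B = bup R Y" using assms by blast
      show "y \<in> bup R (\<Union>{Y. bup R Y \<in> Bs})" using B Y by (auto simp: bup_def)
    qed
    show "bup R (\<Union>{Y. bup R Y \<in> Bs}) \<subseteq> \<Union>Bs" by (auto simp: bup_def)
  qed
  thus ?thesis by blast
qed

lemma wup_Union: "wup R (\<Union>As) = \<Union>(wup R ` As)"
  by (auto simp: wup_def)

lemma bup_Union: "bup R (\<Union>As) = \<Union>(bup R ` As)"
  by (auto simp: bup_def)

lemma wup_bdown: "wup R (bdown R X) \<subseteq> X"
  by (auto simp: wup_def bdown_def Rpred_def Rsucc_def)

lemma sub_bdown_wup: "A \<subseteq> bdown R (wup R A)"
  by (auto simp: wup_def bdown_def Rpred_def Rsucc_def)

lemma bup_mono: "X \<subseteq> Y \<Longrightarrow> bup R X \<subseteq> bup R Y" by (auto simp: bup_def)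
lemma bdown_mono: "X \<subseteq> Y \<Longrightarrow> bdown R X \<subseteq> bdown R Y" by (auto simp: bdown_def)
lemma wup_mono: "X \<subseteq> Y \<Longrightarrow> wup R X \<subseteq> wup R Y" by (auto simp: wup_def)

lemma singS_iff: "y \<in> singS R \<longleftrightarrow> (\<exists>z. Rsucc R y = {z})"
  by (simp add: singS_def card_1_singleton_iff)

lemma refl_self: "refl R \<Longrightarrow> y \<in> Rsucc R y"
  by (simp add: Rsucc_def refl_on_def)

lemma bdown_sub_bup: "refl R \<Longrightarrow> bdown R X \<subseteq> bup R X"
  using refl_self by (fastforce simp: bdown_def bup_def)

lemma wup_empty: "wup R {} = {}" by (simp add: wup_def)
lemma bup_empty: "bup R {} = {}" by (simp add: bup_def)

lemma partI:
  assumes r: "refl R" and nS: "x \<notin> singS R" and cj: "cji_in (range (bup R)) (\<subseteq>) (bup R {x})"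
  shows "cji_in (DMRS R) pair_le (bdown R {x}, bup R {x})"
proof -
  define Bx where "Bx = bup R {x}"
  have bd: "bdown R {x} = {}"
  proof (rule ccontr)
    assume "bdown R {x} \<noteq> {}"
    then obtain y where y: "Rsucc R y \<subseteq> {x}" by (auto simp: bdown_def)
    with refl_self[OF r, of y] have "Rsucc R y = {x}" "y = x" by auto
    thus False using nS singS_iff by metis
  qed
  have BS: "Bx \<inter> singS R = {}"
  proof (rule ccontr)
    assume "Bx \<inter> singS R \<noteq> {}"
    then obtain y z where "x \<in> Rsucc R y" "Rsucc R y = {z}" by (auto simp: Bx_def bup_def singS_iff)
    with refl_self[OF r, of y] have "Rsucc R y = {x}" "y = x" by auto
    thus False using nS singS_iff by metis
  qed
  have jin: "(bdown R {x}, Bx) \<in> DMRS R"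
    unfolding DMRS_def using BS bd by (auto simp: Bx_def wup_empty bup_empty)
  show ?thesis unfolding cji_in_def Bx_def[symmetric]
  proof (intro conjI allI impI jin)
    fix Ss assume Ss: "Ss \<subseteq> DMRS R" and J: "is_join_in (DMRS R) pair_le Ss (bdown R {x}, Bx)"
    have ub: "\<And>s. s \<in> Ss \<Longrightarrow> fst s = {} \<and> snd s \<subseteq> Bx"
      using J bd by (auto simp: is_join_in_def pair_le_def)
    have sr: "snd ` Ss \<subseteq> range (bup R)" using Ss by (auto simp: DMRS_def)
    define U where "U = \<Union>(snd ` Ss)"
    have Ur: "U \<in> range (bup R)" using bup_Union_range[OF sr] U_def by simp
    have US: "U \<inter> singS R = {}" using ub BS by (fastforce simp: U_def)
    have Pin: "({}, U) \<in> DMRS R"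
    proof -
      obtain Y where "U = bup R Y" using Ur by blast
      moreover have "{} = bdown R {}" using refl_self[OF r] by (auto simp: bdown_def)
      ultimately show ?thesis using US by (auto simp: DMRS_def wup_empty bup_empty)
    qed
    have "\<forall>s\<in>Ss. pair_le s ({}, U)" using ub by (auto simp: pair_le_def U_def)
    hence "pair_le (bdown R {x}, Bx) ({}, U)" using J Pin by (auto simp: is_join_in_def)
    hence BU: "Bx \<subseteq> U" by (simp add: pair_le_def)
    have "is_join_in (range (bup R)) (\<subseteq>) (snd ` Ss) Bx"
      unfolding is_join_in_def using ub BU unfolding U_def Bx_def by fastforce
    hence "Bx \<in> snd ` Ss" using cj sr by (auto simp: cji_in_def Bx_def)
    then obtain s where "s \<in> Ss" "snd s = Bx" by blast
    moreover have "fst s = bdown R {x}" using ub bd \<open>s \<in> Ss\<close> by simp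
    ultimately show "(bdown R {x}, Bx) \<in> Ss" by (metis prod.collapse)
  qed
qed

lemma partII:
  assumes r: "refl R" and cj: "cji_in (range (wup R)) (\<subseteq>) (wup R {x})"
  shows "cji_in (DMRS R) pair_le (bdown R (wup R {x}), bup R (wup R {x}))"
proof -
  define W where "W = wup R {x}"
  have WR: "W = Rsucc R x" by (auto simp: W_def wup_def Rpred_def Rsucc_def)
  have xW: "x \<in> bdown R W" using WR by (simp add: bdown_def)
  have jin: "(bdown R W, bup R W) \<in> DMRS R"
  proof -
    have "bup R (wup R (bdown R W)) \<subseteq> bup R W" by (rule bup_mono[OF wup_bdown])
    moreover have "bdown R W \<inter> singS R = bup R W \<inter> singS R"
      using bdown_sub_bup[OF r, of W] by (fastforce simp: singS_iff bdown_def bup_def)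
    ultimately show ?thesis by (auto simp: DMRS_def)
  qed
  show ?thesis unfolding cji_in_def W_def[symmetric]
  proof (intro conjI allI impI jin)
    fix Ss assume Ss: "Ss \<subseteq> DMRS R" and J: "is_join_in (DMRS R) pair_le Ss (bdown R W, bup R W)"
    have ub: "\<And>s. s \<in> Ss \<Longrightarrow> fst s \<subseteq> bdown R W \<and> snd s \<subseteq> bup R W"
      using J by (auto simp: is_join_in_def pair_le_def)
    have D: "\<And>s. s \<in> Ss \<Longrightarrow> fst s \<in> range (bdown R) \<and> snd s \<in> range (bup R)
        \<and> bup R (wup R (fst s)) \<subseteq> snd s \<and> fst s \<inter> singS R = snd s \<inter> singS R"
    proof -
      fix s assume "s \<in> Ss"
      hence "s \<in> DMRS R" using Ss by blast
      thus "?thesis s" by (cases s) (simp add: DMRS_def)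
    qed
    have sr: "snd ` Ss \<subseteq> range (bup R)" using D by blast
    define U where "U = \<Union>(snd ` Ss)"
    define C where "C = wup R ` (fst ` Ss)"
    define UC where "UC = \<Union>C"
    have UCw: "UC = wup R (\<Union>(fst ` Ss))" by (simp add: UC_def C_def wup_Union)
    have Ur: "U \<in> range (bup R)" using bup_Union_range[OF sr] U_def by simp
    have bUC: "bup R UC \<subseteq> U"
    proof -
      have "bup R UC = \<Union>(bup R ` C)" by (simp add: UC_def bup_Union)
      also have "\<dots> \<subseteq> U"
      proof
        fix y assume "y \<in> \<Union>(bup R ` C)"
        then obtain s where s: "s \<in> Ss" "y \<in> bup R (wup R (fst s))" unfolding C_def by blast
        hence "y \<in> snd s" using D[OF s(1)] by blast
        thus "y \<in> U" using s(1) unfolding U_def by blast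
      qed
      finally show ?thesis .
    qed
    have fsub: "\<And>s. s \<in> Ss \<Longrightarrow> fst s \<subseteq> bdown R UC"
    proof -
      fix s assume "s \<in> Ss"
      have "wup R (fst s) \<subseteq> UC" using \<open>s \<in> Ss\<close> by (auto simp: UC_def C_def)
      hence "bdown R (wup R (fst s)) \<subseteq> bdown R UC" by (rule bdown_mono)
      thus "fst s \<subseteq> bdown R UC" using sub_bdown_wup[of "fst s" R] by (rule order_trans[rotated])
    qed
    have Pin: "(bdown R UC, U) \<in> DMRS R"
    proof -
      have "bup R (wup R (bdown R UC)) \<subseteq> U" using bup_mono[OF wup_bdown[of R UC]] bUC by (rule order_trans)
      moreover have "bdown R UC \<inter> singS R = U \<inter> singS R"
      proof
        show "bdown R UC \<inter> singS R \<subseteq> U \<inter> singS R"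
        proof
          fix y assume y: "y \<in> bdown R UC \<inter> singS R"
          then obtain z where z: "Rsucc R y = {z}" by (auto simp: singS_iff)
          hence "y \<in> bup R UC" using y by (auto simp: bdown_def bup_def)
          thus "y \<in> U \<inter> singS R" using y bUC by blast
        qed
        show "U \<inter> singS R \<subseteq> bdown R UC \<inter> singS R"
        proof
          fix y assume y: "y \<in> U \<inter> singS R"
          then obtain s where s: "s \<in> Ss" "y \<in> snd s" by (auto simp: U_def)
          hence "y \<in> fst s" using D y by blast
          thus "y \<in> bdown R UC \<inter> singS R" using fsub s y by blast
        qed
      qed
      ultimately show ?thesis using Ur by (auto simp: DMRS_def)
    qed
    have "\<forall>s\<in>Ss. pair_le s (bdown R UC, U)" using fsub by (auto simp: pair_le_def U_def)
    hence "pair_le (bdown R W, bup R W) (bdown R UC, U)" using J Pin by (auto simp: is_join_in_def)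
    hence "x \<in> bdown R UC" using xW by (auto simp: pair_le_def)
    hence WUC: "W \<subseteq> UC" using WR by (simp add: bdown_def)
    have Cr: "C \<subseteq> range (wup R)" by (auto simp: C_def)
    have CW: "\<And>c. c \<in> C \<Longrightarrow> c \<subseteq> W"
    proof -
      fix c assume "c \<in> C"
      then obtain s where s: "s \<in> Ss" "c = wup R (fst s)" unfolding C_def by blast
      have "wup R (fst s) \<subseteq> wup R (bdown R W)" using ub[OF s(1)] by (intro wup_mono) simp
      thus "c \<subseteq> W" using s(2) wup_bdown[of R W] by simp
    qed
    have "is_join_in (range (wup R)) (\<subseteq>) C W"
      unfolding is_join_in_def
    proof (intro conjI ballI impI)
      show "W \<in> range (wup R)" unfolding W_def by simp
      show "\<And>c. c \<in> C \<Longrightarrow> c \<subseteq> W" by (rule CW)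
      fix u assume "u \<in> range (wup R)" "\<forall>c\<in>C. c \<subseteq> u"
      hence "UC \<subseteq> u" unfolding UC_def by blast
      thus "W \<subseteq> u" using WUC by simp
    qed
    hence "W \<in> C" using cj Cr by (auto simp: cji_in_def W_def)
    then obtain s where s: "s \<in> Ss" "wup R (fst s) = W" by (auto simp: C_def)
    obtain Y where Y: "fst s = bdown R Y" using D[OF s(1)] by blast
    have "bdown R W \<subseteq> fst s" using s(2) Y bdown_mono[OF wup_bdown[of R Y]] by simp
    moreover have "bup R W \<subseteq> snd s" using s(2) D[OF s(1)] by simp
    ultimately have "fst s = bdown R W" "snd s = bup R W" using ub[OF s(1)] by auto
    hence "s = (bdown R W, bup R W)" by (simp add: prod_eq_iff)
    thus "(bdown R W, bup R W) \<in> Ss" using s by simp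
  qed
qed

theorem mainTheorem13:
  fixes R :: "'a rel" and x :: 'a
  assumes "refl R"
  shows "(x \<notin> singS R \<and> cji_in (range (bup R)) (\<subseteq>) (bup R {x})
            \<longrightarrow> cji_in (DMRS R) pair_le (bdown R {x}, bup R {x}))
       \<and> (cji_in (range (wup R)) (\<subseteq>) (wup R {x})
            \<longrightarrow> cji_in (DMRS R) pair_le (bdown R (wup R {x}), bup R (wup R {x})))"
  using partI[OF assms] partII[OF assms] by blast

end
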